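(* Let $\lambda\in[0,\frac{\pi}{2})$ and let $(|B(\lambda)\rangle,\mathcal{M})$ be a maximally impossible quantum scenario with $|M_1|=|M_2|=N$ and $M_3=\{C_0,\dots,C_{n-1}\}$. Then for all $l,l_1,l_2\in\{0,\dots,n-1\}$, $\delta(\lambda,C_l)$ and $\beta(\lambda,C_{l_1})-\beta(\lambda,C_{l_2})$ are congruent modulo $2\pi$ to integer multiples of $\frac{\pi}{N}$.
   Context: For $\varphi\in\mathbb{R}$, $E_\varphi=\cos\varphi X+\sin\varphi Y$ is the equatorial measurement, with $+1$ eigenvector $|\varphi\rangle=\frac{1}{\sqrt2}(|0\rangle+e^{i\varphi}|1\rangle)$ and $-1$ eigenvector $|\varphi+\pi\rangle$; outcomes $+1,-1$ relabelled $0,1$; measurements identified with angles. A measurement scenario $\mathcal{M}=(M_1,M_2,M_3)$ consists of finite nonempty sets $M_i\subseteq[0,\pi)$ of angles for qubit $i$. For a three-qubit state $|\psi\rangle$, the event $(A,B,C)\to(a,b,c)$ with $(A,B,C)\in M_1\times M_2\times M_3$ is impossible if $(\langle A+a\pi|\otimes\langle B+b\pi|\otimes\langle C+c\pi|)|\psi\rangle=0$. For $\lambda\in[0,\frac{\pi}{2})$, $|v_\lambda\rangle=\cos\frac{\lambda}{2}|0\rangle+\sin\frac{\lambda}{2}|1\rangle$, $|w_\lambda\rangle=\sin\frac{\lambda}{2}|0\rangle+\cos\frac{\lambda}{2}|1\rangle$, and the interpolant state is $|B(\lambda)\rangle=\frac{1}{\sqrt2}(|00\rangle|v_\lambda\rangle+|11\rangle|w_\lambda\rangle)$.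 $(|B(\lambda)\rangle,\mathcal{M})$ is maximally impossible if for every $C\in M_3$ and $z\in\{0,1\}$: every $A\in M_1$ admits $B\in M_2$, $a,b\in\{0,1\}$ with $(A,B,C)\to(a,b,z)$ impossible, and every $B\in M_2$ admits $A\in M_1$, $a,b$ with $(A,B,C)\to(a,b,z)$ impossible. Define modulo $2\pi$: $\beta(\lambda,\varphi)=\varphi-2\arctan\left(\frac{\cos\frac{\lambda}{2}\sin\varphi}{\sin\frac{\lambda}{2}+\cos\frac{\lambda}{2}\cos\varphi}\right)$ and $\delta(\lambda,\varphi)=\beta(\lambda,\varphi+\pi)-\beta(\lambda,\varphi)$. *)

theory Defs
  imports Complex_Main
begin

text \<open>Computational basis indices are the naturals 0 and 1.
  The equatorial +1 eigenvector |phi> = (|0> + e^{i phi}|1>)/sqrt 2.\<close>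
definition eq_ket :: "real \<Rightarrow> nat \<Rightarrow> complex" where
  "eq_ket phi x = (if x = 0 then 1 / complex_of_real (sqrt 2)
                   else cis phi / complex_of_real (sqrt 2))"

definition v_ket :: "real \<Rightarrow> nat \<Rightarrow> complex" where
  "v_ket lam z = (if z = 0 then complex_of_real (cos (lam/2)) else complex_of_real (sin (lam/2)))"

definition w_ket :: "real \<Rightarrow> nat \<Rightarrow> complex" where
  "w_ket lam z = (if z = 0 then complex_of_real (sin (lam/2)) else complex_of_real (cos (lam/2)))"

definition B_state :: "real \<Rightarrow> nat \<Rightarrow> nat \<Rightarrow> nat \<Rightarrow> complex" where
  "B_state lam x y z = (1 / complex_of_real (sqrt 2)) *
     ((if x = 0 \<and> y = 0 then v_ket lam z else 0) + (if x = 1 \<and> y = 1 then w_ket lam z else 0))"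

definition impossible ::
  "(nat \<Rightarrow> nat \<Rightarrow> nat \<Rightarrow> complex) \<Rightarrow> real \<Rightarrow> real \<Rightarrow> real \<Rightarrow> nat \<Rightarrow> nat \<Rightarrow> nat \<Rightarrow> bool" where
  "impossible psi A B C a b c \<longleftrightarrow>
     (\<Sum>x\<in>{0,1}. \<Sum>y\<in>{0,1}. \<Sum>z\<in>{0,1}.
        cnj (eq_ket (A + real a * pi) x) * cnj (eq_ket (B + real b * pi) y) *
        cnj (eq_ket (C + real c * pi) z) * psi x y z) = 0"

definition scenario :: "real set \<Rightarrow> real set \<Rightarrow> real set \<Rightarrow> bool" where
  "scenario M1 M2 M3 \<longleftrightarrow>
     (\<forall>M\<in>{M1, M2, M3}. finite M \<and> M \<noteq> {} \<and> M \<subseteq> {0..<pi})"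

definition maximally_impossible ::
  "(nat \<Rightarrow> nat \<Rightarrow> nat \<Rightarrow> complex) \<Rightarrow> real set \<Rightarrow> real set \<Rightarrow> real set \<Rightarrow> bool" where
  "maximally_impossible psi M1 M2 M3 \<longleftrightarrow>
     (\<forall>C\<in>M3. \<forall>z\<in>{0,1}.
        (\<forall>A\<in>M1. \<exists>B\<in>M2. \<exists>a\<in>{0,1}. \<exists>b\<in>{0,1}. impossible psi A B C a b z) \<and>
        (\<forall>B\<in>M2. \<exists>A\<in>M1. \<exists>a\<in>{0,1}. \<exists>b\<in>{0,1}. impossible psi A B C a b z))"

text \<open>Where the denominator vanishes (the numerator then does not,
  for lambda in [0, pi/2)), the arctangent is +-pi/2, so 2 arctan = +-pi = pi (mod 2 pi).\<close>
definition beta :: "real \<Rightarrow> real \<Rightarrow> real" where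
  "beta lam phi =
     (let d = sin (lam/2) + cos (lam/2) * cos phi in
      if d = 0 then phi - pi
      else phi - 2 * arctan (cos (lam/2) * sin phi / d))"

definition delta :: "real \<Rightarrow> real \<Rightarrow> real" where
  "delta lam phi = beta lam (phi + pi) - beta lam phi"

definition cong_2pi :: "real \<Rightarrow> real \<Rightarrow> bool" where
  "cong_2pi x y \<longleftrightarrow> (\<exists>m::int. x - y = 2 * pi * of_int m)"

end

theory Submission
  imports Defs
begin

lemma amp:
  fixes lam A B C :: real and a b z :: nat
  defines "Cp \<equiv> C + real z * pi"
  defines "P \<equiv> complex_of_real (cos (lam/2)) + cis (-Cp) * complex_of_real (sin (lam/2))"
  defines "Q \<equiv> complex_of_real (sin (lam/2)) + cis (-Cp) * complex_of_real (cos (lam/2))"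
  defines "X \<equiv> A + real a * pi + (B + real b * pi)"
  shows "impossible (B_state lam) A B C a b z \<longleftrightarrow> P + cis (-X) * Q = 0"
proof -
  define r where "r = 1 / complex_of_real (sqrt 2)"
  have r0: "r \<noteq> 0" by (simp add: r_def)
  have e0: "cnj (eq_ket phi 0) = r" for phi by (simp add: r_def eq_ket_def)
  have e1: "cnj (eq_ket phi (Suc 0)) = cis (-phi) * r" for phi by (simp add: r_def eq_ket_def cis_cnj)
  have b00: "B_state lam 0 0 w = r * v_ket lam w" for w by (simp add: B_state_def r_def)
  have b11: "B_state lam (Suc 0) (Suc 0) w = r * w_ket lam w" for w by (simp add: B_state_def r_def)
  have b01: "B_state lam 0 (Suc 0) w = 0" "B_state lam (Suc 0) 0 w = 0" for w by (simp_all add: B_state_def)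
  have cX: "cis (-X) = cis (- (A + real a * pi)) * cis (- (B + real b * pi))"
    by (simp add: cis_mult X_def)
  have "(\<Sum>x\<in>{0,1::nat}. \<Sum>y\<in>{0,1::nat}. \<Sum>w\<in>{0,1::nat}.
        cnj (eq_ket (A + real a * pi) x) * cnj (eq_ket (B + real b * pi) y) *
        cnj (eq_ket (C + real z * pi) w) * B_state lam x y w) = r^4 * (P + cis (-X) * Q)"
    unfolding P_def Q_def Cp_def cX
    by (simp add: e0 e1 b00 b11 b01 v_ket_def w_ket_def algebra_simps power4_eq_xxxx del: minus_add_distrib)
  thus ?thesis unfolding impossible_def using r0 by simp
qed

lemma rot:
  fixes u w :: real
  assumes "u \<noteq> 0"
  defines "al \<equiv> arctan (w / u)"
  shows "u * cos (2*al) + w * sin (2*al) = u" "w * cos (2*al) - u * sin (2*al) = -w"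
proof -
  define t where "t = w / u"
  have w: "w = t * u" using assms(1) by (simp add: t_def)
  have p: "1 + t\<^sup>2 > 0" by (simp add: add_pos_nonneg)
  have sq: "(sqrt (1 + t\<^sup>2))\<^sup>2 = 1 + t\<^sup>2" using p by simp
  have c2: "cos (2*al) = (1 - t\<^sup>2) / (1 + t\<^sup>2)"
    unfolding cos_double al_def t_def[symmetric] cos_arctan sin_arctan
    using p sq by (simp add: power_divide field_simps)
  have s2: "sin (2*al) = 2 * t / (1 + t\<^sup>2)"
    unfolding sin_double al_def t_def[symmetric] cos_arctan sin_arctan
    using p sq by (simp add: power_divide field_simps power2_eq_square)
  have p': "1 + t\<^sup>2 \<noteq> 0" using p by simp
  have "u * ((1 - t\<^sup>2) / (1 + t\<^sup>2)) + t * u * (2 * t / (1 + t\<^sup>2))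
      = (u * (1 - t\<^sup>2) + t * u * (2 * t)) / (1 + t\<^sup>2)"
    by (simp add: add_divide_distrib)
  also have "u * (1 - t\<^sup>2) + t * u * (2 * t) = u * (1 + t\<^sup>2)"
    by (simp add: algebra_simps power2_eq_square)
  finally show "u * cos (2*al) + w * sin (2*al) = u" unfolding c2 s2 w using p' by simp
  have "t * u * ((1 - t\<^sup>2) / (1 + t\<^sup>2)) - u * (2 * t / (1 + t\<^sup>2))
      = (t * u * (1 - t\<^sup>2) - u * (2 * t)) / (1 + t\<^sup>2)"
    by (metis diff_divide_distrib times_divide_eq_right)
  also have "t * u * (1 - t\<^sup>2) - u * (2 * t) = - (t * u) * (1 + t\<^sup>2)"
    by (simp add: algebra_simps power2_eq_square)
  finally show "w * cos (2*al) - u * sin (2*al) = -w" unfolding c2 s2 w using p' by simp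
qed

lemma Qeq:
  fixes lam phi :: real
  defines "P \<equiv> complex_of_real (cos (lam/2)) + cis (-phi) * complex_of_real (sin (lam/2))"
  defines "Q \<equiv> complex_of_real (sin (lam/2)) + cis (-phi) * complex_of_real (cos (lam/2))"
  shows "Q = cis (beta lam phi) * P"
proof -
  define s where "s = sin (lam/2)"
  define c where "c = cos (lam/2)"
  define u where "u = s + c * cos phi"
  define w where "w = c * sin phi"
  have Qc: "Q = Complex u (-w)" unfolding Q_def u_def w_def s_def c_def
    by (simp add: complex_eq_iff cis.sel)
  have "cis phi * P = cis phi * complex_of_real (cos (lam/2)) + cis phi * cis (-phi) * complex_of_real (sin (lam/2))"
    unfolding P_def by (simp add: algebra_simps)
  also have "\<dots> = Complex u w" unfolding u_def w_def s_def c_def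
    by (simp add: cis_mult complex_eq_iff cis.sel algebra_simps)
  finally have "cis phi * P = Complex u w" .
  moreover have "P = cis (-phi) * (cis phi * P)" by (simp add: mult.assoc[symmetric] cis_mult)
  ultimately have Pc: "P = cis (-phi) * Complex u w" by simp
  show ?thesis
  proof (cases "u = 0")
    case True
    have b: "beta lam phi = phi - pi" using True unfolding beta_def u_def s_def c_def by simp
    have k: "x * (cos phi * cos phi) + x * (sin phi * sin phi) = x" for x
      by (metis distrib_left mult_1_right sin_cos_squared_add3)
    show ?thesis unfolding Qc Pc b using True k
      by (simp add: complex_eq_iff cis.sel algebra_simps)
  next
    case False
    define al where "al = arctan (w / u)"
    have b: "beta lam phi = phi - 2 * al" using False unfolding beta_def al_def u_def s_def c_def w_def
      by (simp add: Let_def)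
    have "cis (beta lam phi) * P = cis (- (2*al)) * Complex u w"
      unfolding Pc b by (simp add: mult.assoc[symmetric] cis_mult)
    also have "\<dots> = Complex u (-w)"
      using rot[OF False, of w] unfolding al_def[symmetric]
      by (simp add: complex_eq_iff cis.sel algebra_simps)
    finally show ?thesis unfolding Qc by simp
  qed
qed

lemma sc_bounds:
  fixes lam :: real
  assumes "0 \<le> lam" "lam < pi/2"
  shows "0 \<le> sin (lam/2)" "sin (lam/2) < cos (lam/2)" "0 < cos (lam/2)"
proof -
  show "0 \<le> sin (lam/2)" using assms by (intro sin_ge_zero) auto
  have "sin (lam/2) < sin (pi/2 - lam/2)" using assms by (intro sin_monotone_2pi) auto
  thus "sin (lam/2) < cos (lam/2)" by (simp add: sin_cos_eq)
  show "0 < cos (lam/2)" using assms by (intro cos_gt_zero_pi) auto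
qed

lemma P_nz:
  fixes lam phi :: real
  assumes "0 \<le> lam" "lam < pi/2"
  shows "complex_of_real (cos (lam/2)) + cis (-phi) * complex_of_real (sin (lam/2)) \<noteq> 0"
proof
  define s where "s = sin (lam/2)"
  define c where "c = cos (lam/2)"
  have b: "0 \<le> s" "s < c" "0 < c" using sc_bounds[OF assms] by (simp_all add: s_def c_def)
  assume "complex_of_real (cos (lam/2)) + cis (-phi) * complex_of_real (sin (lam/2)) = 0"
  hence "c + cos phi * s = 0" "sin phi * s = 0"
    by (auto simp: complex_eq_iff s_def c_def cis.sel)
  have "s \<noteq> 0" proof
    assume "s = 0" with \<open>c + cos phi * s = 0\<close> b show False by simp
  qed
  with \<open>sin phi * s = 0\<close> have "sin phi = 0" by simp
  hence "(cos phi)\<^sup>2 = 1" using sin_cos_squared_add[of phi] by simp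
  hence "cos phi = 1 \<or> cos phi = -1" by (simp add: power2_eq_1_iff)
  with \<open>c + cos phi * s = 0\<close> b show False by auto
qed

lemma imp_cons:
  fixes lam A B C :: real and a b z :: nat
  assumes "0 \<le> lam" "lam < pi/2" "impossible (B_state lam) A B C a b z"
  shows "\<exists>k::int. A + B - beta lam (C + real z * pi) = of_int k * pi"
proof -
  define Cp where "Cp = C + real z * pi"
  define P where "P = complex_of_real (cos (lam/2)) + cis (-Cp) * complex_of_real (sin (lam/2))"
  define Q where "Q = complex_of_real (sin (lam/2)) + cis (-Cp) * complex_of_real (cos (lam/2))"
  define X where "X = A + real a * pi + (B + real b * pi)"
  define be where "be = beta lam Cp"
  have "P + cis (-X) * Q = 0" using amp[of lam A B C a b z] assms(3)
    unfolding P_def Q_def X_def Cp_def by simp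
  moreover have "Q = cis be * P" unfolding Q_def P_def be_def by (rule Qeq)
  ultimately have "P * (1 + cis (be - X)) = 0"
    by (simp add: algebra_simps cis_mult)
  moreover have "P \<noteq> 0" unfolding P_def by (rule P_nz[OF assms(1,2)])
  ultimately have "cis (be - X) = -1" by (simp add: add_eq_0_iff)
  hence "Re (cis (be - X)) = -1" by simp
  hence "cos (be - X) = -1" by simp
  hence "cos (be - X + pi) = 1" by simp
  then obtain n :: int where n: "be - X + pi = of_int n * 2 * pi" using cos_one_2pi_int by blast
  have "A + B - be = of_int (1 - 2*n - int a - int b) * pi"
    using n unfolding X_def by (simp add: algebra_simps)
  thus ?thesis unfolding be_def Cp_def by blast
qed

lemma int_small:
  fixes d :: int
  assumes "\<bar>of_int d * pi\<bar> < pi"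
  shows "d = 0"
proof -
  have "\<bar>real_of_int d\<bar> * pi < 1 * pi" using assms by (simp add: abs_mult)
  hence "\<bar>real_of_int d\<bar> < 1" using pi_gt_zero by (meson mult_less_cancel_right_pos)
  thus ?thesis by linarith
qed

lemma key:
  fixes lam C :: real and M1 M2 M3 :: "real set" and N z :: nat
  assumes "0 \<le> lam" and "lam < pi / 2"
    and "scenario M1 M2 M3"
    and "maximally_impossible (B_state lam) M1 M2 M3"
    and "card M1 = N" and "card M2 = N"
    and "C \<in> M3" and "z \<in> {0,1}"
  shows "\<exists>K::int. sum id M1 + sum id M2 - real N * beta lam (C + real z * pi) = of_int K * pi"
proof -
  define be where "be = beta lam (C + real z * pi)"
  have fin: "finite M1" "finite M2" and sub: "M1 \<subseteq> {0..<pi}" "M2 \<subseteq> {0..<pi}"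
    using assms(3) unfolding scenario_def by auto
  have "\<forall>A\<in>M1. \<exists>B\<in>M2. \<exists>a\<in>{0,1}. \<exists>b\<in>{0,1}. impossible (B_state lam) A B C a b z"
    using assms(4,7,8) unfolding maximally_impossible_def by blast
  hence "\<forall>A\<in>M1. \<exists>B. B \<in> M2 \<and> (\<exists>k::int. A + B - be = of_int k * pi)"
    using imp_cons[OF assms(1,2)] unfolding be_def by metis
  then obtain f where f: "\<forall>A\<in>M1. f A \<in> M2 \<and> (\<exists>k::int. A + f A - be = of_int k * pi)"
    by metis
  then obtain g where fg: "\<And>A. A \<in> M1 \<Longrightarrow> f A \<in> M2" "\<And>A. A \<in> M1 \<Longrightarrow> A + f A - be = of_int (g A) * pi"
    by metis
  have inj: "inj_on f M1"
  proof (rule inj_onI)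
    fix x y assume xy: "x \<in> M1" "y \<in> M1" "f x = f y"
    have "x - y = of_int (g x - g y) * pi" using fg(2)[OF xy(1)] fg(2)[OF xy(2)] xy(3)
      by (simp add: algebra_simps)
    moreover have "x \<in> {0..<pi}" "y \<in> {0..<pi}" using sub(1) xy(1,2) by auto
    hence "\<bar>x - y\<bar> < pi" by auto
    ultimately have "g x - g y = 0" using int_small by (metis \<open>\<bar>x - y\<bar> < pi\<close>)
    thus "x = y" using \<open>x - y = _\<close> by simp
  qed
  have img: "f ` M1 = M2"
  proof (rule card_subset_eq[OF fin(2)])
    show "f ` M1 \<subseteq> M2" using fg(1) by auto
    show "card (f ` M1) = card M2" using card_image[OF inj] assms(5,6) by simp
  qed
  have s2: "sum id M2 = sum f M1" using sum.reindex[OF inj, of id] img by simp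
  have "(\<Sum>A\<in>M1. A + f A - be) = (\<Sum>A\<in>M1. of_int (g A) * pi)"
    using fg(2) by (rule sum.cong[OF refl])
  also have "\<dots> = of_int (\<Sum>A\<in>M1. g A) * pi" by (simp add: sum_distrib_right)
  finally have "sum id M1 + sum f M1 - real N * be = of_int (\<Sum>A\<in>M1. g A) * pi"
    using assms(5) by (simp add: sum.distrib sum_subtractf)
  thus ?thesis using s2 unfolding be_def by metis
qed

theorem lemma14:
  fixes lam :: real and M1 M2 M3 :: "real set" and N n :: nat and C :: "nat \<Rightarrow> real"
  assumes "0 \<le> lam" and "lam < pi / 2"
    and "scenario M1 M2 M3"
    and "maximally_impossible (B_state lam) M1 M2 M3"
    and "card M1 = N" and "card M2 = N"
    and "M3 = C ` {..<n}"
  shows "(\<forall>l<n. \<exists>k::int. cong_2pi (delta lam (C l)) (of_int k * pi / real N)) \<and>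
         (\<forall>l1<n. \<forall>l2<n. \<exists>k::int.
           cong_2pi (beta lam (C l1) - beta lam (C l2)) (of_int k * pi / real N))"
proof -
  have "finite M1" "M1 \<noteq> {}" using assms(3) unfolding scenario_def by auto
  hence Npos: "real N > 0" using assms(5) card_gt_0_iff by fastforce
  define S where "S = sum id M1 + sum id M2"
  have K: "\<exists>K::int. S - real N * beta lam (C l + real z * pi) = of_int K * pi"
    if "l < n" "z \<in> {0,1}" for l z
    unfolding S_def using key[OF assms(1-6), of "C l" z] that assms(7) by blast
  have diff: "\<exists>k::int. x - y = of_int k * pi / real N"
    if "S - real N * x = of_int K1 * pi" "S - real N * y = of_int K2 * pi" for x y K1 K2
  proof
    have "real N * (x - y) = of_int (K2 - K1) * pi" using that by (simp add: algebra_simps)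
    thus "x - y = of_int (K2 - K1) * pi / real N" using Npos by (simp add: field_simps)
  qed
  have c0: "cong_2pi x y" if "x = y" for x y unfolding cong_2pi_def using that by (intro exI[of _ 0]) simp
  show ?thesis
  proof (intro conjI allI impI)
    fix l assume l: "l < n"
    obtain K1 where K1: "S - real N * beta lam (C l + pi) = of_int K1 * pi" using K[OF l, of 1] by auto
    obtain K0 where K0: "S - real N * beta lam (C l) = of_int K0 * pi" using K[OF l, of 0] by auto
    obtain k where "delta lam (C l) = of_int k * pi / real N"
      using diff[OF K1 K0] unfolding delta_def by blast
    thus "\<exists>k::int. cong_2pi (delta lam (C l)) (of_int k * pi / real N)" using c0 by blast
  next
    fix l1 l2 assume l: "l1 < n" "l2 < n"
    obtain K1 where K1: "S - real N * beta lam (C l1) = of_int K1 * pi" using K[OF l(1), of 0] by auto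
    obtain K2 where K2: "S - real N * beta lam (C l2) = of_int K2 * pi" using K[OF l(2), of 0] by auto
    obtain k where "beta lam (C l1) - beta lam (C l2) = of_int k * pi / real N"
      using diff[OF K1 K2] by blast
    thus "\<exists>k::int. cong_2pi (beta lam (C l1) - beta lam (C l2)) (of_int k * pi / real N)" using c0 by blast
  qed
qed

end
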